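(* Let $d$ be a prime power, $\mathbb{F}_d$ the finite field with $d$ elements, and $(p_{nm})_{n,m\in\mathbb{F}_d}$ a probability distribution on $\mathbb{F}_d\times\mathbb{F}_d$ (the Bell-diagonal probabilities of a two-qudit state, with $p_{00}$ the initial fidelity). Let $L_1,\dots,L_{d+1}$ be the sums of $p_{nm}$ over the $d+1$ lines through the origin, $\{(0,k):k\in\mathbb{F}_d\}$ and $\{(k,ak):k\in\mathbb{F}_d\}$ for $a\in\mathbb{F}_d$ (the weights of the $d+1$ mutually unbiased bases). If $p_{00}>\frac{d-1}{2d}$, then $\max_i L_i>1/2$; that is, the MUB-adapted mCAEPP satisfies the spectral dominance condition, so $p_{00}>\frac{d-1}{2d}$ is a sufficient initial-fidelity threshold for the MUB pre-processing strategy.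
   Context: Spectral dominance condition: after rotating the MUB line of maximal weight onto the primary (computational) axis by local operations, that primary axis carries weight $L_{\max}>1/2$. *)

theory Defs
  imports Complex_Main
begin

text \<open>The d+1 lines through the origin of F_d x F_d, indexed by 'a option:
  None is the vertical line {(0,k)}, Some a is the line {(k, a*k)}.\<close>
definition mub_line :: "'a::field option \<Rightarrow> ('a \<times> 'a) set" where
  "mub_line l = (case l of None \<Rightarrow> {(0, k) | k. True}
                          | Some a \<Rightarrow> {(k, a * k) | k. True})"

definition mub_weight :: "('a::{finite,field} \<Rightarrow> 'a \<Rightarrow> real) \<Rightarrow> 'a option \<Rightarrow> real" where
  "mub_weight p l = (\<Sum>(n, m)\<in>mub_line l. p n m)"

end

theory Submission
  imports Defs
begin

lemma card_UNIV_opt: "card (UNIV :: 'a::finite option set) = card (UNIV :: 'a set) + 1"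
proof -
  have "(UNIV :: 'a option set) = insert None (Some ` UNIV)"
    by (metis UNIV_option_conv)
  moreover have "card (insert None (Some ` (UNIV :: 'a set))) = Suc (card (Some ` (UNIV :: 'a set)))"
    by (rule card_insert_disjoint) auto
  moreover have "card (Some ` (UNIV :: 'a set)) = card (UNIV :: 'a set)"
    by (rule card_image) simp
  ultimately show ?thesis by simp
qed

lemma card_lines:
  fixes x :: "'a::{finite,field} \<times> 'a"
  shows "card {l. x \<in> mub_line l} = (if x = (0,0) then card (UNIV :: 'a set) + 1 else 1)"
proof (cases "x = (0,0)")
  case True
  then have "{l. x \<in> mub_line l} = UNIV"
    by (auto simp: mub_line_def split: option.splits)
  then show ?thesis using True by (simp add: card_UNIV_opt)
next
  case False
  obtain n m where x: "x = (n,m)" by fastforce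
  show ?thesis
  proof (cases "n = 0")
    case True
    then have "{l. x \<in> mub_line l} = {None}"
      using False x by (auto simp: mub_line_def split: option.splits)
    then show ?thesis using False by simp
  next
    case nz: False
    then have "{l. x \<in> mub_line l} = {Some (m / n)}"
      using x by (auto simp: mub_line_def split: option.splits)
    then show ?thesis using False by simp
  qed
qed

theorem theorem3:
  fixes p :: "'a::{finite,field} \<Rightarrow> 'a \<Rightarrow> real"
  assumes nonneg: "\<And>n m. p n m \<ge> 0"
    and total: "(\<Sum>n\<in>UNIV. \<Sum>m\<in>UNIV. p n m) = 1"
    and fid: "p 0 0 > (real (card (UNIV :: 'a set)) - 1) / (2 * real (card (UNIV :: 'a set)))"
  shows "Max (range (mub_weight p)) > 1 / 2"
proof -
  define q where "q = (\<lambda>(n, m). p n m)"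
  define d where "d = real (card (UNIV :: 'a set))"
  have dpos: "d > 0" unfolding d_def by (simp add: card_gt_0_iff)
  have tot: "sum q UNIV = 1"
    using total unfolding q_def
    by (simp add: sum.cartesian_product[symmetric] UNIV_Times_UNIV[symmetric] del: UNIV_Times_UNIV)
  have w: "mub_weight p l = (\<Sum>x\<in>UNIV. if x \<in> mub_line l then q x else 0)" for l
    unfolding mub_weight_def q_def by (simp add: sum.If_cases)
  have "(\<Sum>l\<in>UNIV. mub_weight p l) = (\<Sum>x\<in>UNIV. \<Sum>l\<in>UNIV. if x \<in> mub_line l then q x else 0)"
    unfolding w by (rule sum.swap)
  also have "\<dots> = (\<Sum>x\<in>UNIV. q x * real (card {l. x \<in> mub_line l}))"
    by (simp add: sum.If_cases mult.commute)
  also have "\<dots> = (\<Sum>x\<in>UNIV. q x + (if x = (0,0) then d * q x else 0))"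
    by (rule sum.cong) (auto simp: card_lines d_def algebra_simps)
  also have "\<dots> = 1 + d * p 0 0"
    using tot by (simp add: sum.distrib q_def)
  finally have S: "(\<Sum>l\<in>UNIV. mub_weight p l) = 1 + d * p 0 0" .
  have "(\<Sum>l\<in>UNIV. mub_weight p l) \<le> of_nat (card (UNIV :: 'a option set)) * Max (range (mub_weight p))"
    by (rule sum_bounded_above) simp
  then have le: "1 + d * p 0 0 \<le> (d + 1) * Max (range (mub_weight p))"
    using S unfolding card_UNIV_opt d_def by (simp add: algebra_simps)
  have f: "p 0 0 > (d - 1) / (2 * d)" using fid unfolding d_def .
  have "(d - 1) / (2 * d) * d = (d - 1) / 2" using dpos by simp
  then have "d * p 0 0 > (d - 1) / 2"
    using mult_strict_right_mono[OF f dpos] by (simp add: mult.commute)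
  then have "(d + 1) * Max (range (mub_weight p)) > (d + 1) * (1/2)"
    using le by (simp add: algebra_simps)
  then show ?thesis using dpos
    by (meson mult_less_cancel_left_pos add_pos_pos zero_less_one)
qed

end
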